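(* Let $G=(V,E)$ be a finite simple strongly connected directed graph with a fixed total order on $V$, and let $\mathbf b$ be a spanning tree of $G$. Let $Z=\phi(\mathbf b)$. Then the set of vertices erased when running the exploration algorithm on $\mathbf b$ coincides with the set of boundary points of $\mathbf b$, i.e. the set of vertices $u\in V\setminus Z$ having an outgoing edge with target in $Z$.
   Context: A spanning tree of $G$ is a subgraph on all vertices with no cycle, one vertex (root) of outdegree $0$ and all others of outdegree $1$. Exploration algorithm (depends on the fixed total order of $V$). Input: a spanning tree $\mathbf a$ rooted at $v$. Initialize $A=\{v\}$, $F=\{e: s(e)\neq v\}$, $\mathbf L$ = FIFO list of edges with target $v$, by increasing source. While $\mathbf L$ is nonempty, take its first edge $e$, with source $w$: if $e\in\mathbf a$, add $w$ to $A$, delete from $\mathbf L$ (and $F$) all edges with source $w$, and append to $\mathbf L$ all edges of $F$ with target $w$ by increasing source; otherwise delete from $\mathbf L$ and $F$ all edges with source or target $w$, and $w$ is said to be erased. At the end $\phi(\mathbf a)=A$. *)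

theory Defs
  imports Main
begin

text \<open>A directed graph is given by a finite vertex set V and an edge set E of pairs
  (source, target). The fixed total order on V is the linorder of the vertex type.\<close>

definition simple_digraph :: "'a set \<Rightarrow> ('a \<times> 'a) set \<Rightarrow> bool" where
  "simple_digraph V E \<longleftrightarrow> finite V \<and> E \<subseteq> V \<times> V \<and> (\<forall>x. (x, x) \<notin> E)"

definition strongly_connected :: "'a set \<Rightarrow> ('a \<times> 'a) set \<Rightarrow> bool" where
  "strongly_connected V E \<longleftrightarrow> (\<forall>u\<in>V. \<forall>w\<in>V. (u, w) \<in> E\<^sup>*)"

definition outdeg :: "('a \<times> 'a) set \<Rightarrow> 'a \<Rightarrow> nat" where
  "outdeg a u = card {e \<in> a. fst e = u}"

definition spanning_tree :: "'a set \<Rightarrow> ('a \<times> 'a) set \<Rightarrow> ('a \<times> 'a) set \<Rightarrow> 'a \<Rightarrow> bool" where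
  "spanning_tree V E a r \<longleftrightarrow> a \<subseteq> E \<and> r \<in> V \<and> acyclic a \<and> outdeg a r = 0
     \<and> (\<forall>u\<in>V. u \<noteq> r \<longrightarrow> outdeg a u = 1)"

type_synonym 'a expl_state = "'a set \<times> ('a \<times> 'a) set \<times> ('a \<times> 'a) list \<times> 'a set"

definition in_edges_sorted :: "('a::linorder \<times> 'a) set \<Rightarrow> 'a \<Rightarrow> ('a \<times> 'a) list" where
  "in_edges_sorted F w = map (\<lambda>u. (u, w)) (sorted_list_of_set {u. (u, w) \<in> F})"

definition expl_init :: "('a::linorder \<times> 'a) set \<Rightarrow> 'a \<Rightarrow> 'a expl_state" where
  "expl_init E r = ({r}, {e \<in> E. fst e \<noteq> r}, in_edges_sorted E r, {})"

definition expl_step :: "('a::linorder \<times> 'a) set \<Rightarrow> 'a expl_state \<Rightarrow> 'a expl_state" where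
  "expl_step a s = (case s of (A, F, L, Er) \<Rightarrow>
     (case L of
        [] \<Rightarrow> (A, F, L, Er)
      | e # L' \<Rightarrow>
          (let w = fst e in
           if e \<in> a then
             (let F' = {f \<in> F. fst f \<noteq> w} in
              (insert w A, F', filter (\<lambda>f. fst f \<noteq> w) L' @ in_edges_sorted F' w, Er))
           else
             (let F' = {f \<in> F. fst f \<noteq> w \<and> snd f \<noteq> w} in
              (A, F', filter (\<lambda>f. fst f \<noteq> w \<and> snd f \<noteq> w) L', insert w Er)))))"

text \<open>Each step with nonempty L removes at least one edge from F (the processed edge lies
  in F), so after card E steps the list L is empty and the algorithm has stopped; further
  steps are the identity.\<close>
definition expl_final :: "('a::linorder \<times> 'a) set \<Rightarrow> ('a \<times> 'a) set \<Rightarrow> 'a \<Rightarrow> 'a expl_state" where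
  "expl_final E a r = (expl_step a ^^ card E) (expl_init E r)"

definition phi :: "('a::linorder \<times> 'a) set \<Rightarrow> ('a \<times> 'a) set \<Rightarrow> 'a \<Rightarrow> 'a set" where
  "phi E a r = fst (expl_final E a r)"

definition erased :: "('a::linorder \<times> 'a) set \<Rightarrow> ('a \<times> 'a) set \<Rightarrow> 'a \<Rightarrow> 'a set" where
  "erased E a r = snd (snd (snd (expl_final E a r)))"

definition boundary :: "'a set \<Rightarrow> ('a \<times> 'a) set \<Rightarrow> 'a set \<Rightarrow> 'a set" where
  "boundary V E Z = {u \<in> V - Z. \<exists>z\<in>Z. (u, z) \<in> E}"

end

theory Submission
  imports Defs
begin

definition inv :: "'a set \<Rightarrow> ('a \<times> 'a) set \<Rightarrow> 'a expl_state \<Rightarrow> bool" where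
  "inv V E s = (case s of (A, F, L, Er) \<Rightarrow>
     F = {e\<in>E. fst e \<notin> A \<and> fst e \<notin> Er \<and> snd e \<notin> Er} \<and> set L \<subseteq> F
     \<and> (\<forall>e\<in>set L. snd e \<in> A) \<and> A \<inter> Er = {} \<and> Er \<subseteq> V
     \<and> (\<forall>u\<in>Er. \<exists>z\<in>A. (u, z) \<in> E)
     \<and> (\<forall>z\<in>A. \<forall>u. (u, z) \<in> E \<longrightarrow> u \<in> A \<or> u \<in> Er \<or> (u, z) \<in> set L))"

lemma set_in_edges:
  assumes "finite F"
  shows "set (in_edges_sorted F w) = {e\<in>F. snd e = w}"
proof -
  have "{u. (u, w) \<in> F} \<subseteq> fst ` F" by force
  then have "finite {u. (u, w) \<in> F}" using assms finite_subset by blast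
  then show ?thesis unfolding in_edges_sorted_def by auto
qed

lemma inv_init:
  assumes "simple_digraph V E"
  shows "inv V E (expl_init E r)"
proof -
  have fin: "finite E" using assms unfolding simple_digraph_def
    by (meson finite_SigmaI finite_subset)
  show ?thesis
    using assms unfolding inv_def expl_init_def simple_digraph_def
    by (auto simp: set_in_edges[OF fin])
qed

lemma inv_step:
  assumes "simple_digraph V E" and "inv V E (A, F, e # L', Er)"
  shows "inv V E (expl_step a (A, F, e # L', Er))"
    and "card (fst (snd (expl_step a (A, F, e # L', Er)))) < card F"
proof -
  have fin: "finite E" using assms unfolding simple_digraph_def
    by (meson finite_SigmaI finite_subset)
  obtain w t where e: "e = (w, t)" by force
  note I = assms(2)[unfolded inv_def, simplified]
  have FE: "F \<subseteq> E" using I by auto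
  have finF: "finite F" using fin FE finite_subset by blast
  have eF: "e \<in> F" using I by auto
  have tA: "t \<in> A" using I e by auto
  have wA: "w \<notin> A" "w \<notin> Er" "t \<notin> Er" using I e eF by auto
  have wE: "(w, t) \<in> E" using eF e FE by auto
  have wV: "w \<in> V" using wE assms(1) unfolding simple_digraph_def by auto
  show "inv V E (expl_step a (A, F, e # L', Er))"
  proof (cases "e \<in> a")
    case True
    define F' where "F' = {f \<in> F. fst f \<noteq> w}"
    have finF': "finite F'" using finF F'_def by auto
    have st: "expl_step a (A, F, e # L', Er) =
      (insert w A, F', filter (\<lambda>f. fst f \<noteq> w) L' @ in_edges_sorted F' w, Er)"
      unfolding expl_step_def F'_def using True e by (simp add: Let_def)
    have sie: "set (in_edges_sorted F' w) = {f\<in>F'. snd f = w}"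
      by (rule set_in_edges[OF finF'])
    show ?thesis unfolding st inv_def using I wA wV wE tA
      apply (simp only: sie set_append set_filter prod.case)
      apply (simp add: F'_def)
      apply (intro conjI)
      by (auto simp: e)
  next
    case False
    define F' where "F' = {f \<in> F. fst f \<noteq> w \<and> snd f \<noteq> w}"
    have st: "expl_step a (A, F, e # L', Er) =
      (A, F', filter (\<lambda>f. fst f \<noteq> w \<and> snd f \<noteq> w) L', insert w Er)"
      unfolding expl_step_def F'_def using False e by (simp add: Let_def)
    show ?thesis unfolding st inv_def using I wA wV wE tA
      apply (simp add: F'_def)
      apply (intro conjI)
      by (auto simp: e)
  qed
  show "card (fst (snd (expl_step a (A, F, e # L', Er)))) < card F"
  proof -
    have "fst (snd (expl_step a (A, F, e # L', Er))) \<subseteq> F - {e}"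
      unfolding expl_step_def using e by (auto simp: Let_def)
    then show ?thesis using eF finF
      by (meson card_Diff1_less dual_order.strict_trans2 card_mono finite_Diff)
  qed
qed

lemma step_nil: "expl_step a (A, F, [], Er) = (A, F, [], Er)"
  unfolding expl_step_def by simp

lemma iter:
  assumes "simple_digraph V E"
  shows "inv V E ((expl_step a ^^ n) (expl_init E r)) \<and>
    (fst (snd (snd ((expl_step a ^^ n) (expl_init E r)))) = [] \<or>
     n + card (fst (snd ((expl_step a ^^ n) (expl_init E r)))) \<le> card E)"
proof (induction n)
  case 0
  have fin: "finite E" using assms unfolding simple_digraph_def
    by (meson finite_SigmaI finite_subset)
  have "card {e \<in> E. fst e \<noteq> r} \<le> card E" using fin by (intro card_mono) auto
  then show ?case using inv_init[OF assms] by (simp add: expl_init_def)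
next
  case (Suc n)
  obtain A F L Er where s: "(expl_step a ^^ n) (expl_init E r) = (A, F, L, Er)"
    by (metis prod_cases4)
  show ?case
  proof (cases L)
    case Nil
    then show ?thesis using Suc s by (simp add: step_nil)
  next
    case (Cons e L')
    then show ?thesis using Suc s inv_step[OF assms, of A F e L' Er a]
      by (cases "(expl_step a ^^ n) (expl_init E r)") auto
  qed
qed

theorem lemma4p3:
  fixes V :: "'a::linorder set" and E b :: "('a \<times> 'a) set" and r :: 'a
  assumes "simple_digraph V E"
    and "strongly_connected V E"
    and "spanning_tree V E b r"
  shows "erased E b r = boundary V E (phi E b r)"
proof -
  obtain A F L Er where s: "expl_final E b r = (A, F, L, Er)"
    by (metis prod_cases4)
  have H: "inv V E (A, F, L, Er) \<and> (L = [] \<or> card E + card F \<le> card E)"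
    using iter[OF assms(1), where a=b and n="card E" and r=r] s unfolding expl_final_def by simp
  have fin: "finite E" using assms(1) unfolding simple_digraph_def
    by (meson finite_SigmaI finite_subset)
  have "L = []"
  proof (cases "L = []")
    case False
    then have "card F = 0" using H by simp
    moreover have "F \<subseteq> E" using H unfolding inv_def by auto
    moreover have "finite F" using fin finite_subset \<open>F \<subseteq> E\<close> by blast
    ultimately have "F = {}" by simp
    then show ?thesis using H unfolding inv_def by auto
  qed
  then have I: "inv V E (A, F, [], Er)" using H by simp
  have "Er = boundary V E A"
    using I unfolding inv_def boundary_def by auto
  then show ?thesis using s unfolding erased_def phi_def by simp
qed

end
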